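(* Let $G$ be a $3$-edge-connected graph and let $(o,f)$ be an all-positive nowhere-zero $k$-flow on $G$ for some integer $k$. Then every edge $e$ with $f(e)=1$ and every strong $2$-edge of $(o,f)$ is deletable in the orientation $(G,o)$.
   Context: An orientation is strong if for every ordered pair of distinct vertices $u,v$ there is a directed $uv$-path. An edge $e$ is deletable in an orientation $(G,o)$ if the restriction of $o$ to $E(G)\setminus\{e\}$ is a strong orientation of $G-e$. An all-positive nowhere-zero $k$-flow on $G$ is a pair $(o,f)$ of an orientation $o$ of $G$ and a map $f:E(G)\to\{1,2,\dots,k-1\}$ such that at every vertex the sum of $f$ over incoming edges equals the sum of $f$ over outgoing edges. An edge $e$ with $f(e)=2$ is a strong $2$-edge of $(o,f)$ if $G$ has no $3$-edge-cut containing $e$ in which the other two edges both have $f$-value $1$. *)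

theory Defs
  imports Main
begin

text \<open>A finite multigraph (loops and parallel edges allowed): vertex set V, edge set E,
  each edge e having ends s e and t e (a fixed reference labelling of the two ends).
  An orientation is o :: 'e => bool: ori e = True directs e from s e to t e,
  ori e = False directs it from t e to s e.\<close>

definition graph :: "'v set \<Rightarrow> 'e set \<Rightarrow> ('e \<Rightarrow> 'v) \<Rightarrow> ('e \<Rightarrow> 'v) \<Rightarrow> bool" where
  "graph V E s t \<longleftrightarrow> finite V \<and> finite E \<and> (\<forall>e\<in>E. s e \<in> V \<and> t e \<in> V)"

definition otail :: "('e \<Rightarrow> 'v) \<Rightarrow> ('e \<Rightarrow> 'v) \<Rightarrow> ('e \<Rightarrow> bool) \<Rightarrow> 'e \<Rightarrow> 'v" where
  "otail s t ori e = (if ori e then s e else t e)"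

definition ohead :: "('e \<Rightarrow> 'v) \<Rightarrow> ('e \<Rightarrow> 'v) \<Rightarrow> ('e \<Rightarrow> bool) \<Rightarrow> 'e \<Rightarrow> 'v" where
  "ohead s t ori e = (if ori e then t e else s e)"

definition adj :: "'e set \<Rightarrow> ('e \<Rightarrow> 'v) \<Rightarrow> ('e \<Rightarrow> 'v) \<Rightarrow> 'v \<Rightarrow> 'v \<Rightarrow> bool" where
  "adj E s t u v \<longleftrightarrow> (\<exists>e\<in>E. (s e = u \<and> t e = v) \<or> (s e = v \<and> t e = u))"

definition connected_graph :: "'v set \<Rightarrow> 'e set \<Rightarrow> ('e \<Rightarrow> 'v) \<Rightarrow> ('e \<Rightarrow> 'v) \<Rightarrow> bool" where
  "connected_graph V E s t \<longleftrightarrow> (\<forall>u\<in>V. \<forall>v\<in>V. (adj E s t)\<^sup>*\<^sup>* u v)"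

definition k_edge_connected :: "nat \<Rightarrow> 'v set \<Rightarrow> 'e set \<Rightarrow> ('e \<Rightarrow> 'v) \<Rightarrow> ('e \<Rightarrow> 'v) \<Rightarrow> bool" where
  "k_edge_connected k V E s t \<longleftrightarrow>
     (\<forall>F. F \<subseteq> E \<and> card F < k \<longrightarrow> connected_graph V (E - F) s t)"

definition arc :: "'e set \<Rightarrow> ('e \<Rightarrow> 'v) \<Rightarrow> ('e \<Rightarrow> 'v) \<Rightarrow> ('e \<Rightarrow> bool) \<Rightarrow> 'v \<Rightarrow> 'v \<Rightarrow> bool" where
  "arc E s t ori u v \<longleftrightarrow> (\<exists>e\<in>E. otail s t ori e = u \<and> ohead s t ori e = v)"

definition strong_orientation ::
  "'v set \<Rightarrow> 'e set \<Rightarrow> ('e \<Rightarrow> 'v) \<Rightarrow> ('e \<Rightarrow> 'v) \<Rightarrow> ('e \<Rightarrow> bool) \<Rightarrow> bool" where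
  "strong_orientation V E s t ori \<longleftrightarrow>
     (\<forall>u\<in>V. \<forall>v\<in>V. u \<noteq> v \<longrightarrow> (arc E s t ori)\<^sup>+\<^sup>+ u v)"

definition deletable ::
  "'v set \<Rightarrow> 'e set \<Rightarrow> ('e \<Rightarrow> 'v) \<Rightarrow> ('e \<Rightarrow> 'v) \<Rightarrow> ('e \<Rightarrow> bool) \<Rightarrow> 'e \<Rightarrow> bool" where
  "deletable V E s t ori e \<longleftrightarrow> strong_orientation V (E - {e}) s t ori"

definition all_positive_nz_flow ::
  "nat \<Rightarrow> 'v set \<Rightarrow> 'e set \<Rightarrow> ('e \<Rightarrow> 'v) \<Rightarrow> ('e \<Rightarrow> 'v) \<Rightarrow> ('e \<Rightarrow> bool) \<Rightarrow> ('e \<Rightarrow> nat) \<Rightarrow> bool" where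
  "all_positive_nz_flow k V E s t ori f \<longleftrightarrow>
     (\<forall>e\<in>E. 1 \<le> f e \<and> f e \<le> k - 1) \<and>
     (\<forall>v\<in>V. (\<Sum>e\<in>{e\<in>E. ohead s t ori e = v}. f e) = (\<Sum>e\<in>{e\<in>E. otail s t ori e = v}. f e))"

definition edge_cut :: "'e set \<Rightarrow> ('e \<Rightarrow> 'v) \<Rightarrow> ('e \<Rightarrow> 'v) \<Rightarrow> 'v set \<Rightarrow> 'e set" where
  "edge_cut E s t X = {e\<in>E. (s e \<in> X) \<noteq> (t e \<in> X)}"

definition three_edge_cut :: "'v set \<Rightarrow> 'e set \<Rightarrow> ('e \<Rightarrow> 'v) \<Rightarrow> ('e \<Rightarrow> 'v) \<Rightarrow> 'e set \<Rightarrow> bool" where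
  "three_edge_cut V E s t C \<longleftrightarrow>
     (\<exists>X. X \<subseteq> V \<and> X \<noteq> {} \<and> X \<noteq> V \<and> C = edge_cut E s t X) \<and> card C = 3"

definition strong_2_edge ::
  "'v set \<Rightarrow> 'e set \<Rightarrow> ('e \<Rightarrow> 'v) \<Rightarrow> ('e \<Rightarrow> 'v) \<Rightarrow> ('e \<Rightarrow> nat) \<Rightarrow> 'e \<Rightarrow> bool" where
  "strong_2_edge V E s t f e \<longleftrightarrow> e \<in> E \<and> f e = 2 \<and>
     \<not> (\<exists>C. three_edge_cut V E s t C \<and> e \<in> C \<and> (\<forall>e'\<in>C - {e}. f e' = 1))"

end

theory Submission
  imports Defs
begin

lemma sum_group_aux:
  assumes "finite E" "finite X"
  shows "(\<Sum>v\<in>X. \<Sum>e\<in>{e\<in>E. g e = v}. (f::'e\<Rightarrow>nat) e) = (\<Sum>e\<in>{e\<in>E. g e \<in> X}. f e)"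
proof -
  have "(\<Sum>e\<in>{e\<in>E. g e \<in> X}. f e) = (\<Sum>v\<in>X. \<Sum>e\<in>{x\<in>{e\<in>E. g e \<in> X}. g x = v}. f e)"
    by (rule sum.group[symmetric]) (use assms in auto)
  also have "\<dots> = (\<Sum>v\<in>X. \<Sum>e\<in>{e\<in>E. g e = v}. f e)"
    by (rule sum.cong) (auto intro: sum.cong)
  finally show ?thesis by simp
qed

lemma cut_flow:
  assumes g: "graph V E s t"
    and fl: "\<forall>v\<in>V. (\<Sum>e\<in>{e\<in>E. ohead s t ori e = v}. (f::'e\<Rightarrow>nat) e) = (\<Sum>e\<in>{e\<in>E. otail s t ori e = v}. f e)"
    and X: "X \<subseteq> V"
  shows "(\<Sum>e\<in>{e\<in>E. ohead s t ori e \<in> X \<and> otail s t ori e \<notin> X}. f e)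
       = (\<Sum>e\<in>{e\<in>E. otail s t ori e \<in> X \<and> ohead s t ori e \<notin> X}. f e)"
proof -
  let ?h = "ohead s t ori" and ?tl = "otail s t ori"
  have fE: "finite E" and fX: "finite X" using g X unfolding graph_def by (auto intro: finite_subset)
  have "(\<Sum>e\<in>{e\<in>E. ?h e \<in> X}. f e) = (\<Sum>v\<in>X. \<Sum>e\<in>{e\<in>E. ?h e = v}. f e)"
    using sum_group_aux[OF fE fX] by simp
  also have "\<dots> = (\<Sum>v\<in>X. \<Sum>e\<in>{e\<in>E. ?tl e = v}. f e)"
    by (rule sum.cong[OF refl]) (use fl X in auto)
  also have "\<dots> = (\<Sum>e\<in>{e\<in>E. ?tl e \<in> X}. f e)"
    using sum_group_aux[OF fE fX] by simp
  finally have eq: "(\<Sum>e\<in>{e\<in>E. ?h e \<in> X}. f e) = (\<Sum>e\<in>{e\<in>E. ?tl e \<in> X}. f e)" .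
  have s1: "{e\<in>E. ?h e \<in> X} = {e\<in>E. ?h e \<in> X \<and> ?tl e \<in> X} \<union> {e\<in>E. ?h e \<in> X \<and> ?tl e \<notin> X}" by auto
  have s2: "{e\<in>E. ?tl e \<in> X} = {e\<in>E. ?h e \<in> X \<and> ?tl e \<in> X} \<union> {e\<in>E. ?tl e \<in> X \<and> ?h e \<notin> X}" by auto
  have "(\<Sum>e\<in>{e\<in>E. ?h e \<in> X}. f e) = (\<Sum>e\<in>{e\<in>E. ?h e \<in> X \<and> ?tl e \<in> X}. f e) + (\<Sum>e\<in>{e\<in>E. ?h e \<in> X \<and> ?tl e \<notin> X}. f e)"
    unfolding s1 by (rule sum.union_disjoint) (use fE in auto)
  moreover have "(\<Sum>e\<in>{e\<in>E. ?tl e \<in> X}. f e) = (\<Sum>e\<in>{e\<in>E. ?h e \<in> X \<and> ?tl e \<in> X}. f e) + (\<Sum>e\<in>{e\<in>E. ?tl e \<in> X \<and> ?h e \<notin> X}. f e)"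
    unfolding s2 by (rule sum.union_disjoint) (use fE in auto)
  ultimately show ?thesis using eq by simp
qed

lemma adj_closed:
  assumes "(adj (E - edge_cut E s t X) s t)\<^sup>*\<^sup>* a b" "a \<in> X"
  shows "b \<in> X"
  using assms
proof (induction rule: rtranclp_induct)
  case base then show ?case by simp
next
  case (step y z)
  then obtain x where "x \<in> E - edge_cut E s t X" "(s x = y \<and> t x = z) \<or> (s x = z \<and> t x = y)"
    unfolding adj_def by blast
  then show ?case using step.IH step.prems unfolding edge_cut_def by auto
qed

theorem lemma1:
  fixes V :: "'v set" and E :: "'e set" and s t :: "'e \<Rightarrow> 'v"
    and ori :: "'e \<Rightarrow> bool" and f :: "'e \<Rightarrow> nat" and k :: nat
  assumes "graph V E s t"
    and "k_edge_connected 3 V E s t"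
    and "all_positive_nz_flow k V E s t ori f"
    and "e \<in> E"
    and "f e = 1 \<or> strong_2_edge V E s t f e"
  shows "deletable V E s t ori e"
proof (rule ccontr)
  let ?h = "ohead s t ori" and ?tl = "otail s t ori"
  assume "\<not> deletable V E s t ori e"
  then obtain u v where u: "u \<in> V" and v: "v \<in> V" and uv: "u \<noteq> v"
    and nr: "\<not> (arc (E - {e}) s t ori)\<^sup>+\<^sup>+ u v"
    unfolding deletable_def strong_orientation_def by blast
  define X where "X = {w\<in>V. (arc (E - {e}) s t ori)\<^sup>*\<^sup>* u w}"
  have XV: "X \<subseteq> V" unfolding X_def by auto
  have uX: "u \<in> X" unfolding X_def using u by auto
  have vX: "v \<notin> X"
  proof
    assume "v \<in> X"
    then have "(arc (E - {e}) s t ori)\<^sup>*\<^sup>* u v" unfolding X_def by simp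
    then show False using nr uv rtranclpD by metis
  qed
  have fE: "finite E" using assms(1) unfolding graph_def by auto
  have ends: "\<And>x. x \<in> E \<Longrightarrow> ?h x \<in> V \<and> ?tl x \<in> V"
    using assms(1) unfolding graph_def ohead_def otail_def by auto
  define In where "In = {x\<in>E. ?h x \<in> X \<and> ?tl x \<notin> X}"
  define Out where "Out = {x\<in>E. ?tl x \<in> X \<and> ?h x \<notin> X}"
  have Out_sub: "Out \<subseteq> {e}"
  proof
    fix x assume x: "x \<in> Out"
    show "x \<in> {e}"
    proof (rule ccontr)
      assume "x \<notin> {e}"
      then have xE: "x \<in> E - {e}" using x unfolding Out_def by auto
      have "arc (E - {e}) s t ori (?tl x) (?h x)" unfolding arc_def using xE by auto
      moreover have "(arc (E - {e}) s t ori)\<^sup>*\<^sup>* u (?tl x)" using x unfolding Out_def X_def by auto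
      ultimately have "(arc (E - {e}) s t ori)\<^sup>*\<^sup>* u (?h x)" by (rule rtranclp.rtrancl_into_rtrancl[rotated])
      then have "?h x \<in> X" unfolding X_def using ends xE by auto
      then show False using x unfolding Out_def by auto
    qed
  qed
  have flow: "\<forall>v\<in>V. (\<Sum>e\<in>{e\<in>E. ?h e = v}. f e) = (\<Sum>e\<in>{e\<in>E. ?tl e = v}. f e)"
    and fpos: "\<forall>x\<in>E. 1 \<le> f x"
    using assms(3) unfolding all_positive_nz_flow_def by auto
  have sumeq: "sum f In = sum f Out"
    unfolding In_def Out_def by (rule cut_flow[OF assms(1) flow XV])
  have cutEq: "edge_cut E s t X = In \<union> Out"
    unfolding edge_cut_def In_def Out_def ohead_def otail_def by (auto split: if_splits)
  have fin: "finite In" "finite Out" using fE unfolding In_def Out_def by auto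
  have card3: "card (edge_cut E s t X) \<ge> 3"
  proof (rule ccontr)
    assume "\<not> 3 \<le> card (edge_cut E s t X)"
    then have "connected_graph V (E - edge_cut E s t X) s t"
    proof -
      have "edge_cut E s t X \<subseteq> E" unfolding edge_cut_def by auto
      then show ?thesis using assms(2) \<open>\<not> 3 \<le> card (edge_cut E s t X)\<close>
        unfolding k_edge_connected_def by simp
    qed
    then have "(adj (E - edge_cut E s t X) s t)\<^sup>*\<^sup>* u v"
      unfolding connected_graph_def using u v by auto
    from adj_closed[OF this uX] show False using vX by simp
  qed
  have cOut: "card Out \<le> 1" using Out_sub card_mono[of "{e}" Out] by auto
  have "card (In \<union> Out) \<le> card In + card Out" by (rule card_Un_le)
  then have cIn: "card In \<ge> 2" using card3 cutEq cOut by auto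
  have "card In \<le> sum f In"
  proof -
    have "card In = (\<Sum>x\<in>In. 1)" by simp
    also have "\<dots> \<le> sum f In" using fpos unfolding In_def by (intro sum_mono) auto
    finally show ?thesis .
  qed
  have sOut: "sum f Out \<le> f e"
  proof (cases "e \<in> Out")
    case True then have "Out = {e}" using Out_sub by auto
    then show ?thesis by simp
  next
    case False then have "Out = {}" using Out_sub by auto
    then show ?thesis by simp
  qed
  have eOut: "e \<in> Out"
  proof (rule ccontr)
    assume "e \<notin> Out" then have "Out = {}" using Out_sub by auto
    then show False using sumeq \<open>card In \<le> sum f In\<close> cIn by simp
  qed
  have Outs: "Out = {e}" using eOut Out_sub by auto
  have ge2: "f e \<ge> 2" using sumeq \<open>card In \<le> sum f In\<close> cIn Outs by simp
  then have s2: "strong_2_edge V E s t f e" using assms(5) by auto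
  then have fe2: "f e = 2" unfolding strong_2_edge_def by auto
  have sIn: "sum f In = 2" using sumeq Outs fe2 by simp
  have cIn2: "card In = 2" using sIn \<open>card In \<le> sum f In\<close> cIn by simp
  have all1: "\<forall>x\<in>In. f x = 1"
  proof (rule ccontr)
    assume "\<not> (\<forall>x\<in>In. f x = 1)"
    then obtain y where y: "y \<in> In" "f y \<noteq> 1" by auto
    then have fy: "f y \<ge> 2" using fpos unfolding In_def by force
    have "sum f In = f y + sum f (In - {y})" using fin(1) y(1) by (simp add: sum.remove)
    moreover have "card (In - {y}) \<le> sum f (In - {y})"
    proof -
      have "card (In - {y}) = (\<Sum>x\<in>In - {y}. 1)" by simp
      also have "\<dots> \<le> sum f (In - {y})" using fpos unfolding In_def by (intro sum_mono) auto
      finally show ?thesis .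
    qed
    moreover have "card (In - {y}) = 1" using cIn2 y(1) fin(1) by simp
    ultimately show False using sIn fy by simp
  qed
  have eIn: "e \<notin> In" using eOut unfolding In_def Out_def by auto
  have c3: "card (edge_cut E s t X) = 3" using cutEq Outs cIn2 eIn fin by simp
  have X0: "X \<noteq> {}" using uX by auto
  have XnV: "X \<noteq> V" using vX v by auto
  have "three_edge_cut V E s t (edge_cut E s t X)"
    unfolding three_edge_cut_def using XV X0 XnV c3 by blast
  moreover have "e \<in> edge_cut E s t X" using cutEq eOut by auto
  moreover have "\<forall>e'\<in>edge_cut E s t X - {e}. f e' = 1" using cutEq Outs all1 by auto
  ultimately show False using s2 unfolding strong_2_edge_def by blast
qed

end
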